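(* Let $k$ and $m$ be positive integers, let $T$ be a tree of order $m$, and let $G$ be a $k$-edge-connected graph with $\delta(G)>4(k+m)^2$. Then $G$ contains a subtree $T'$ isomorphic to $T$ such that $G-V(T')$ is $k$-edge-connected.
   Context: All graphs are finite, undirected, without loops or multiple edges. $\delta(G)$ is the minimum degree of $G$. For $S\subseteq V(G)$, $G-S$ denotes the subgraph of $G$ induced by $V(G)\setminus S$. The edge-connectivity $\kappa'(G)$ is the minimum size of an edge set $U\subseteq E(G)$ such that $G-U$ is disconnected; a graph is $k$-edge-connected if $\kappa'(G)\geq k$. By convention a trivial (one-vertex) graph is $1$-edge-connected but not $k$-edge-connected for any $k>1$. *)

theory Defs
  imports Main
begin

definition graph :: "'a set \<Rightarrow> 'a set set \<Rightarrow> bool" where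
  "graph V E \<longleftrightarrow> finite V \<and> (\<forall>e\<in>E. \<exists>x y. x \<noteq> y \<and> x \<in> V \<and> y \<in> V \<and> e = {x, y})"

definition degree :: "'a set set \<Rightarrow> 'a \<Rightarrow> nat" where
  "degree E v = card {e \<in> E. v \<in> e}"

text \<open>Minimum degree of a graph with nonempty vertex set.\<close>
definition min_degree :: "'a set \<Rightarrow> 'a set set \<Rightarrow> nat" where
  "min_degree V E = Min (degree E ` V)"

definition adj_rel :: "'a set set \<Rightarrow> ('a \<times> 'a) set" where
  "adj_rel E = {(x, y). {x, y} \<in> E}"

definition connected_graph :: "'a set \<Rightarrow> 'a set set \<Rightarrow> bool" where
  "connected_graph V E \<longleftrightarrow> V \<noteq> {} \<and> (\<forall>x\<in>V. \<forall>y\<in>V. (x, y) \<in> (adj_rel E)\<^sup>*)"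

text \<open>k-edge-connected: a trivial (one-vertex) graph is 1-edge-connected but not
k-edge-connected for k > 1; a nontrivial graph is k-edge-connected iff deleting
any set of fewer than k edges leaves it connected (i.e. its edge-connectivity is
at least k).\<close>
definition k_edge_connected :: "'a set \<Rightarrow> 'a set set \<Rightarrow> nat \<Rightarrow> bool" where
  "k_edge_connected V E k \<longleftrightarrow> V \<noteq> {} \<and>
     (if card V = 1 then k \<le> 1
      else (\<forall>U. U \<subseteq> E \<and> card U < k \<longrightarrow> connected_graph V (E - U)))"

definition is_cycle :: "'a set \<Rightarrow> 'a set set \<Rightarrow> 'a list \<Rightarrow> bool" where
  "is_cycle V E cs \<longleftrightarrow> length cs \<ge> 3 \<and> distinct cs \<and> set cs \<subseteq> V \<and>
     (\<forall>i < length cs - 1. {cs ! i, cs ! (i + 1)} \<in> E) \<and> {last cs, hd cs} \<in> E"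

definition acyclic_graph :: "'a set \<Rightarrow> 'a set set \<Rightarrow> bool" where
  "acyclic_graph V E \<longleftrightarrow> (\<nexists>cs. is_cycle V E cs)"

definition tree :: "'a set \<Rightarrow> 'a set set \<Rightarrow> bool" where
  "tree V E \<longleftrightarrow> graph V E \<and> connected_graph V E \<and> acyclic_graph V E"

definition subgraph :: "'a set \<Rightarrow> 'a set set \<Rightarrow> 'a set \<Rightarrow> 'a set set \<Rightarrow> bool" where
  "subgraph H F V E \<longleftrightarrow> graph H F \<and> H \<subseteq> V \<and> F \<subseteq> E"

definition graph_iso :: "'a set \<Rightarrow> 'a set set \<Rightarrow> 'b set \<Rightarrow> 'b set set \<Rightarrow> bool" where
  "graph_iso V E W F \<longleftrightarrow> (\<exists>f. bij_betw f V W \<and>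
     (\<forall>x\<in>V. \<forall>y\<in>V. {x, y} \<in> E \<longleftrightarrow> {f x, f y} \<in> F))"

definition delete_vertices :: "'a set \<Rightarrow> 'a set set \<Rightarrow> 'a set \<Rightarrow> 'a set \<times> 'a set set" where
  "delete_vertices V E S = (V - S, {e \<in> E. e \<subseteq> V - S})"

end

theory Submission
  imports Defs
begin

definition nbr :: "'a set set \<Rightarrow> 'a \<Rightarrow> 'a set" where
  "nbr E x = {y. {x, y} \<in> E}"

definition cutE :: "'a set set \<Rightarrow> 'a set \<Rightarrow> 'a set \<Rightarrow> 'a set set" where
  "cutE E A B = {e \<in> E. \<exists>a\<in>A. \<exists>b\<in>B. e = {a, b}}"

definition bdry :: "'a set set \<Rightarrow> 'a set \<Rightarrow> 'a set" where
  "bdry E C = {y. y \<notin> C \<and> (\<exists>x\<in>C. {x, y} \<in> E)}"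

lemma graph_edge:
  assumes "graph V E" "{x, y} \<in> E"
  shows "x \<noteq> y \<and> x \<in> V \<and> y \<in> V"
proof -
  from assms obtain a b where "a \<noteq> b" "a \<in> V" "b \<in> V" "{x, y} = {a, b}"
    unfolding graph_def by blast
  then show ?thesis by (auto simp: doubleton_eq_iff)
qed

lemma graph_finE:
  assumes "graph V E" shows "finite E"
proof -
  have "E \<subseteq> Pow V"
  proof
    fix e assume "e \<in> E"
    then obtain x y where "x \<in> V" "y \<in> V" "e = {x, y}" using assms unfolding graph_def by blast
    then show "e \<in> Pow V" by auto
  qed
  moreover have "finite V" using assms unfolding graph_def by blast
  ultimately show ?thesis by (meson finite_Pow_iff finite_subset)
qed

lemma nbr_sub: assumes "graph V E" shows "nbr E x \<subseteq> V"
  unfolding nbr_def using graph_edge[OF assms] by blast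

lemma nbr_sym: "y \<in> nbr E x \<longleftrightarrow> x \<in> nbr E y"
  unfolding nbr_def by (simp add: insert_commute)

lemma degree_nbr:
  assumes "graph V E" shows "degree E v = card (nbr E v)"
proof -
  have img: "{e \<in> E. v \<in> e} = (\<lambda>y. {v, y}) ` nbr E v"
  proof
    show "{e \<in> E. v \<in> e} \<subseteq> (\<lambda>y. {v, y}) ` nbr E v"
    proof
      fix e assume "e \<in> {e \<in> E. v \<in> e}"
      then have e: "e \<in> E" "v \<in> e" by auto
      then obtain a b where "e = {a, b}" using assms unfolding graph_def by blast
      with e show "e \<in> (\<lambda>y. {v, y}) ` nbr E v"
        unfolding nbr_def by (auto simp: insert_commute)
    qed
  qed (auto simp: nbr_def)
  have "inj_on (\<lambda>y. {v, y}) (nbr E v)"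
    by (auto simp: inj_on_def doubleton_eq_iff)
  then show ?thesis unfolding degree_def img by (simp add: card_image)
qed

lemma cutE_sym: "cutE E A B = cutE E B A"
  unfolding cutE_def by (auto simp: insert_commute)

lemma cutE_fin: "graph V E \<Longrightarrow> finite (cutE E A B)"
  unfolding cutE_def by (rule finite_subset[OF _ graph_finE]) auto

lemma card_nbr_cut:
  assumes "graph V E" "b \<in> B"
  shows "card (nbr E b \<inter> A) \<le> card (cutE E A B)"
proof -
  have "inj_on (\<lambda>a. {a, b}) (nbr E b \<inter> A)"
    by (auto simp: inj_on_def doubleton_eq_iff)
  moreover have "(\<lambda>a. {a, b}) ` (nbr E b \<inter> A) \<subseteq> cutE E A B"
    using assms unfolding nbr_def cutE_def by (auto simp: insert_commute)
  ultimately show ?thesis by (rule card_inj_on_le[OF _ _ cutE_fin[OF assms(1)]])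
qed

lemma card_touch_cut:
  assumes "graph V E" "A \<inter> B = {}"
  shows "card {b\<in>B. \<exists>a\<in>A. {a, b} \<in> E} \<le> card (cutE E A B)"
proof -
  define g where "g b = {SOME a. a \<in> A \<and> {a, b} \<in> E, b}" for b
  have g: "(SOME a. a \<in> A \<and> {a, b} \<in> E) \<in> A \<and> g b \<in> E"
    if "b \<in> {b\<in>B. \<exists>a\<in>A. {a, b} \<in> E}" for b
    using that unfolding g_def by (metis (mono_tags, lifting) mem_Collect_eq someI_ex)
  have "inj_on g {b\<in>B. \<exists>a\<in>A. {a, b} \<in> E}"
  proof (rule inj_onI)
    fix x y assume x: "x \<in> {b\<in>B. \<exists>a\<in>A. {a, b} \<in> E}" and y: "y \<in> {b\<in>B. \<exists>a\<in>A. {a, b} \<in> E}"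
      and eq: "g x = g y"
    from g[OF x] g[OF y] x y assms(2) eq show "x = y"
      unfolding g_def by (auto simp: doubleton_eq_iff)
  qed
  moreover have "g ` {b\<in>B. \<exists>a\<in>A. {a, b} \<in> E} \<subseteq> cutE E A B"
    using g unfolding cutE_def g_def by fastforce
  ultimately show ?thesis by (rule card_inj_on_le[OF _ _ cutE_fin[OF assms(1)]])
qed

lemma cross_lemma:
  assumes "(x, y) \<in> (adj_rel F)\<^sup>*" "x \<in> X" "y \<notin> X"
  shows "\<exists>u v. {u, v} \<in> F \<and> u \<in> X \<and> v \<notin> X"
  using assms
proof (induction rule: rtrancl_induct)
  case base then show ?case by simp
next
  case (step y z)
  then show ?case unfolding adj_rel_def by (cases "y \<in> X") auto
qed


lemma kec_cut:
  assumes "graph V E" "k_edge_connected V E k" "card V \<noteq> 1"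
    "B \<subseteq> V" "B \<noteq> {}" "B \<noteq> V"
  shows "k \<le> card (cutE E B (V - B))"
proof (rule ccontr)
  assume "\<not> k \<le> card (cutE E B (V - B))"
  then have lt: "card (cutE E B (V - B)) < k" by simp
  have "cutE E B (V - B) \<subseteq> E" unfolding cutE_def by blast
  with lt assms(2,3) have conn: "connected_graph V (E - cutE E B (V - B))"
    unfolding k_edge_connected_def by auto
  obtain b a where b: "b \<in> B" and a: "a \<in> V - B" using assms(4-6) by blast
  then have "(b, a) \<in> (adj_rel (E - cutE E B (V - B)))\<^sup>*"
    using conn assms(4) unfolding connected_graph_def by blast
  from cross_lemma[OF this b] a obtain u v where
    uv: "{u, v} \<in> E - cutE E B (V - B)" "u \<in> B" "v \<notin> B" by blast
  then have "v \<in> V" using graph_edge[OF assms(1)] by blast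
  with uv show False unfolding cutE_def by blast
qed

lemma cut_kec:
  assumes "V' \<noteq> {}" "card V' \<noteq> 1" "finite E'"
    and cut: "\<And>A. A \<subseteq> V' \<Longrightarrow> A \<noteq> {} \<Longrightarrow> A \<noteq> V' \<Longrightarrow> k \<le> card (cutE E' A (V' - A))"
  shows "k_edge_connected V' E' k"
  unfolding k_edge_connected_def
proof (intro conjI)
  show "V' \<noteq> {}" by fact
  show "if card V' = 1 then k \<le> 1
    else \<forall>U. U \<subseteq> E' \<and> card U < k \<longrightarrow> connected_graph V' (E' - U)"
  proof -
    have "connected_graph V' (E' - U)" if U: "U \<subseteq> E'" "card U < k" for U
    proof -
      have "(x, y) \<in> (adj_rel (E' - U))\<^sup>*" if xy: "x \<in> V'" "y \<in> V'" for x y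
      proof (rule ccontr)
        assume ny: "(x, y) \<notin> (adj_rel (E' - U))\<^sup>*"
        define A where "A = {z \<in> V'. (x, z) \<in> (adj_rel (E' - U))\<^sup>*}"
        have "A \<subseteq> V'" "A \<noteq> {}" "A \<noteq> V'" using xy ny unfolding A_def by auto
        then have k: "k \<le> card (cutE E' A (V' - A))" by (rule cut)
        have "cutE E' A (V' - A) \<subseteq> U"
        proof
          fix e assume "e \<in> cutE E' A (V' - A)"
          then obtain a b where e: "e \<in> E'" "a \<in> A" "b \<in> V' - A" "e = {a, b}"
            unfolding cutE_def by blast
          show "e \<in> U"
          proof (rule ccontr)
            assume "e \<notin> U"
            with e have "(a, b) \<in> adj_rel (E' - U)" unfolding adj_rel_def by auto
            moreover have "(x, a) \<in> (adj_rel (E' - U))\<^sup>*" using e unfolding A_def by blast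
            ultimately have "(x, b) \<in> (adj_rel (E' - U))\<^sup>*" by simp
            with e show False unfolding A_def by blast
          qed
        qed
        then have "card (cutE E' A (V' - A)) \<le> card U"
          using U assms(3) by (meson card_mono finite_subset)
        with k U show False by simp
      qed
      then show ?thesis unfolding connected_graph_def using assms(1) by blast
    qed
    then show ?thesis using assms(2) by simp
  qed
qed

definition tpath :: "'a set set \<Rightarrow> 'a list \<Rightarrow> bool" where
  "tpath F xs \<longleftrightarrow> (\<forall>i. Suc i < length xs \<longrightarrow> {xs ! i, xs ! Suc i} \<in> F)"

lemma simple_path:
  assumes "(x, y) \<in> (adj_rel F)\<^sup>*"
  shows "\<exists>xs. distinct xs \<and> xs \<noteq> [] \<and> hd xs = x \<and> last xs = y \<and> tpath F xs
     \<and> set xs \<subseteq> insert x (\<Union>F)"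
  using assms
proof (induction rule: rtrancl_induct)
  case base
  show ?case by (rule exI[of _ "[x]"]) (auto simp: tpath_def)
next
  case (step y z)
  then obtain xs where xs: "distinct xs" "xs \<noteq> []" "hd xs = x" "last xs = y" "tpath F xs"
    "set xs \<subseteq> insert x (\<Union>F)" by blast
  have yz: "{y, z} \<in> F" using step(2) unfolding adj_rel_def by simp
  show ?case
  proof (cases "z \<in> set xs")
    case True
    then obtain i where i: "i < length xs" "xs ! i = z" by (auto simp: in_set_conv_nth)
    define ys where "ys = take (Suc i) xs"
    have ys_eq: "ys = take i xs @ [z]" unfolding ys_def using i by (simp add: take_Suc_conv_app_nth)
    have "distinct ys" unfolding ys_def using xs(1) by simp
    moreover have "ys \<noteq> []" using ys_eq by simp
    moreover have "hd ys = x" unfolding ys_def using xs(2,3) by (cases xs) auto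
    moreover have "last ys = z" using ys_eq by simp
    moreover have "tpath F ys" using xs(5) unfolding tpath_def ys_def by auto
    moreover have "set ys \<subseteq> insert x (\<Union>F)" unfolding ys_def
      using xs(6) set_take_subset by fastforce
    ultimately show ?thesis by blast
  next
    case False
    define ys where "ys = xs @ [z]"
    have "distinct ys" unfolding ys_def using xs(1) False by simp
    moreover have "ys \<noteq> []" unfolding ys_def by simp
    moreover have "hd ys = x" unfolding ys_def using xs(2,3) by simp
    moreover have "last ys = z" unfolding ys_def by simp
    moreover have "tpath F ys" unfolding tpath_def
    proof (intro allI impI)
      fix j assume j: "Suc j < length ys"
      show "{ys ! j, ys ! Suc j} \<in> F"
      proof (cases "Suc j < length xs")
        case True
        then show ?thesis using xs(5) unfolding tpath_def ys_def by (simp add: nth_append)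
      next
        case False
        then have "Suc j = length xs" using j unfolding ys_def by simp
        then have jj: "j = length xs - 1" by simp
        have "ys ! j = last xs" "ys ! Suc j = z" unfolding ys_def using xs(2) jj
          by (auto simp: nth_append last_conv_nth)
        then show ?thesis using yz xs(4) by simp
      qed
    qed
    moreover have "set ys \<subseteq> insert x (\<Union>F)" unfolding ys_def using xs(6) yz by auto
    ultimately show ?thesis by blast
  qed
qed


lemma adj_rel_mono: "F \<subseteq> F' \<Longrightarrow> (adj_rel F)\<^sup>* \<subseteq> (adj_rel F')\<^sup>*"
  unfolding adj_rel_def by (rule rtrancl_mono) auto

lemma tree_step:
  assumes T: "tree VT ET" and G: "graph V E"
    and deg: "\<forall>c\<in>C0. m \<le> card (nbr E c \<inter> C0)" and cardT: "card VT = m"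
    and P: "P \<subseteq> VT" "card P = n" "P \<noteq> {}" "n < m"
      "\<forall>x\<in>P. \<forall>y\<in>P. (x, y) \<in> (adj_rel {e\<in>ET. e \<subseteq> P})\<^sup>*"
      "inj_on f P" "f ` P \<subseteq> C0" "\<forall>x\<in>P. \<forall>y\<in>P. {x, y} \<in> ET \<longrightarrow> {f x, f y} \<in> E"
  shows "\<exists>P' f'. P' \<subseteq> VT \<and> card P' = Suc n \<and> P' \<noteq> {} \<and>
      (\<forall>x\<in>P'. \<forall>y\<in>P'. (x, y) \<in> (adj_rel {e\<in>ET. e \<subseteq> P'})\<^sup>*) \<and>
      inj_on f' P' \<and> f' ` P' \<subseteq> C0 \<and> (\<forall>x\<in>P'. \<forall>y\<in>P'. {x, y} \<in> ET \<longrightarrow> {f' x, f' y} \<in> E)"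
proof -
  have gT: "graph VT ET" and cT: "connected_graph VT ET" and aT: "acyclic_graph VT ET"
    using T unfolding tree_def by auto
  have finVT: "finite VT" using gT unfolding graph_def by simp
  have "P \<noteq> VT" using P(2,4) cardT by auto
  then obtain y where y: "y \<in> VT" "y \<notin> P" using P(1) by blast
  obtain x where x: "x \<in> P" using P(3) by blast
  have "(x, y) \<in> (adj_rel ET)\<^sup>*" using cT x y P(1) unfolding connected_graph_def by blast
  from cross_lemma[OF this x y(2)] obtain p v where pv: "{p, v} \<in> ET" "p \<in> P" "v \<notin> P"
    by blast
  have vT: "v \<in> VT" using graph_edge[OF gT pv(1)] by blast
  have uniq: "p' = p" if p': "p' \<in> P" "{p', v} \<in> ET" for p'
  proof (rule ccontr)
    assume ne: "p' \<noteq> p"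
    have "(p, p') \<in> (adj_rel {e\<in>ET. e \<subseteq> P})\<^sup>*" using P(5) pv(2) p'(1) by blast
    from simple_path[OF this] obtain xs where xs: "distinct xs" "xs \<noteq> []" "hd xs = p"
      "last xs = p'" "tpath {e\<in>ET. e \<subseteq> P} xs" "set xs \<subseteq> insert p (\<Union>{e\<in>ET. e \<subseteq> P})"
      by blast
    have setxs: "set xs \<subseteq> P" using xs(6) pv(2) by blast
    have len: "length xs \<ge> 2"
    proof (rule ccontr)
      assume a: "\<not> length xs \<ge> 2"
      have "length xs > 0" using xs(2) by simp
      with a have "length xs = 1" by linarith
      then have "hd xs = last xs" by (cases xs) auto
      with xs ne show False by simp
    qed
    define cs where "cs = v # xs"
    have "is_cycle VT ET cs"
      unfolding is_cycle_def
    proof (intro conjI)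
      show "3 \<le> length cs" using len unfolding cs_def by simp
      show "distinct cs" using xs(1) setxs pv(3) unfolding cs_def by auto
      show "set cs \<subseteq> VT" using setxs P(1) vT unfolding cs_def by auto
      show "\<forall>i<length cs - 1. {cs ! i, cs ! (i + 1)} \<in> ET"
      proof (intro allI impI)
        fix i assume i: "i < length cs - 1"
        show "{cs ! i, cs ! (i + 1)} \<in> ET"
        proof (cases i)
          case 0
          then have "cs ! i = v" "cs ! (i + 1) = p" unfolding cs_def using xs(2,3)
            by (auto simp: hd_conv_nth)
          then show ?thesis using pv(1) by (simp add: insert_commute)
        next
          case (Suc j)
          then have "Suc j < length xs" using i unfolding cs_def by simp
          then have "{xs ! j, xs ! Suc j} \<in> ET" using xs(5) unfolding tpath_def by blast
          then show ?thesis unfolding cs_def using Suc by simp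
        qed
      qed
      show "{last cs, hd cs} \<in> ET" unfolding cs_def using xs(2,4) p'(2) by simp
    qed
    then show False using aT unfolding acyclic_graph_def by blast
  qed
  have finC: "finite (f ` P)" using P(1) finVT finite_subset by blast
  have "card (f ` P) = n" using P(2,6) by (simp add: card_image)
  moreover have "m \<le> card (nbr E (f p) \<inter> C0)" using deg P(7) pv(2) by blast
  ultimately have "\<not> (nbr E (f p) \<inter> C0 \<subseteq> f ` P)"
  proof (intro notI)
    assume cn: "card (f ` P) = n" and mle: "m \<le> card (nbr E (f p) \<inter> C0)"
      and sub: "nbr E (f p) \<inter> C0 \<subseteq> f ` P"
    have "card (nbr E (f p) \<inter> C0) \<le> card (f ` P)" by (rule card_mono[OF finC sub])
    with cn mle P(4) show False by linarith
  qed
  then obtain c where c: "c \<in> nbr E (f p)" "c \<in> C0" "c \<notin> f ` P" by blast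
  define f' where "f' = f(v := c)"
  define P' where "P' = insert v P"
  have fP: "\<forall>z\<in>P. f' z = f z" unfolding f'_def using pv(3) by auto
  have "P' \<subseteq> VT" unfolding P'_def using P(1) vT by blast
  moreover have "card P' = Suc n" unfolding P'_def using P(1,2) pv(3) finVT
    by (simp add: finite_subset)
  moreover have "P' \<noteq> {}" unfolding P'_def by simp
  moreover have "inj_on f' P'"
    using P(6) fP c(3) pv(3) unfolding P'_def inj_on_def f'_def by (auto split: if_splits)
  moreover have "f' ` P' \<subseteq> C0" unfolding P'_def f'_def using P(7) c(2) pv(3) by auto
  moreover have "\<forall>x\<in>P'. \<forall>y\<in>P'. {x, y} \<in> ET \<longrightarrow> {f' x, f' y} \<in> E"
  proof (intro ballI impI)
    fix x y assume xy: "x \<in> P'" "y \<in> P'" "{x, y} \<in> ET"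
    have fpc: "{f p, c} \<in> E" using c(1) unfolding nbr_def by simp
    have "x \<noteq> y" using graph_edge[OF gT xy(3)] by blast
    then consider "x \<in> P" "y \<in> P" | "x = v" "y \<in> P" | "x \<in> P" "y = v"
      using xy(1,2) unfolding P'_def by blast
    then show "{f' x, f' y} \<in> E"
    proof cases
      case 1 then show ?thesis using P(8) fP xy(3) by simp
    next
      case 2
      then have "y = p" using uniq xy(3) by (simp add: insert_commute)
      then show ?thesis using 2 fpc fP pv(2) unfolding f'_def by (simp add: insert_commute)
    next
      case 3
      then have "x = p" using uniq xy(3) by simp
      then show ?thesis using 3 fpc fP pv(2) unfolding f'_def by simp
    qed
  qed
  moreover have "\<forall>x\<in>P'. \<forall>y\<in>P'. (x, y) \<in> (adj_rel {e\<in>ET. e \<subseteq> P'})\<^sup>*"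
  proof -
    let ?R = "(adj_rel {e\<in>ET. e \<subseteq> P'})\<^sup>*"
    have sub: "(adj_rel {e\<in>ET. e \<subseteq> P})\<^sup>* \<subseteq> ?R"
      by (rule adj_rel_mono) (auto simp: P'_def)
    have e1: "(p, v) \<in> ?R" using pv unfolding adj_rel_def P'_def by auto
    have e2: "(v, p) \<in> ?R" using pv unfolding adj_rel_def P'_def by (auto simp: insert_commute)
    have inP: "(a, b) \<in> ?R" if "a \<in> P" "b \<in> P" for a b using P(5) sub that by blast
    show ?thesis
    proof (intro ballI)
      fix a b assume ab: "a \<in> P'" "b \<in> P'"
      show "(a, b) \<in> ?R"
      proof (cases "a = v")
        case True
        show ?thesis
        proof (cases "b = v")
          case True with \<open>a = v\<close> show ?thesis by simp
        next
          case False
          then have "b \<in> P" using ab unfolding P'_def by simp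
          then show ?thesis using True e2 inP[OF pv(2)] by (meson rtrancl_trans)
        qed
      next
        case False
        then have a: "a \<in> P" using ab unfolding P'_def by simp
        show ?thesis
        proof (cases "b = v")
          case True
          then show ?thesis using e1 inP[OF a pv(2)] by (meson rtrancl_trans)
        next
          case False
          then show ?thesis using a ab inP unfolding P'_def by simp
        qed
      qed
    qed
  qed
  ultimately show ?thesis by blast
qed

lemma tree_embed:
  assumes T: "tree VT ET" and G: "graph V E" and cardT: "card VT = m"
    and C0: "C0 \<noteq> {}" and deg: "\<forall>c\<in>C0. m \<le> card (nbr E c \<inter> C0)"
  shows "\<exists>f. inj_on f VT \<and> f ` VT \<subseteq> C0 \<and> (\<forall>x\<in>VT. \<forall>y\<in>VT. {x, y} \<in> ET \<longrightarrow> {f x, f y} \<in> E)"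
proof -
  have gT: "graph VT ET" and cT: "connected_graph VT ET"
    using T unfolding tree_def by auto
  have finVT: "finite VT" using gT unfolding graph_def by simp
  have ne: "VT \<noteq> {}" using cT unfolding connected_graph_def by simp
  have inv: "\<exists>P f. P \<subseteq> VT \<and> card P = n \<and> P \<noteq> {} \<and>
      (\<forall>x\<in>P. \<forall>y\<in>P. (x, y) \<in> (adj_rel {e\<in>ET. e \<subseteq> P})\<^sup>*) \<and>
      inj_on f P \<and> f ` P \<subseteq> C0 \<and> (\<forall>x\<in>P. \<forall>y\<in>P. {x, y} \<in> ET \<longrightarrow> {f x, f y} \<in> E)"
    if "1 \<le> n" "n \<le> m" for n
    using that
  proof (induction n)
    case 0 then show ?case by simp
  next
    case (Suc n)
    show ?case
    proof (cases "n = 0")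
      case True
      obtain r where r: "r \<in> VT" using ne by blast
      obtain c where c: "c \<in> C0" using C0 by blast
      have "{r, r} \<notin> ET" using graph_edge[OF gT] by blast
      then show ?thesis using True r c
        by (intro exI[of _ "{r}"] exI[of _ "\<lambda>_. c"]) auto
    next
      case False
      then obtain P f where PP: "P \<subseteq> VT" "card P = n" "P \<noteq> {}"
        "\<forall>x\<in>P. \<forall>y\<in>P. (x, y) \<in> (adj_rel {e\<in>ET. e \<subseteq> P})\<^sup>*"
        "inj_on f P" "f ` P \<subseteq> C0" "\<forall>x\<in>P. \<forall>y\<in>P. {x, y} \<in> ET \<longrightarrow> {f x, f y} \<in> E"
        using Suc by auto
      have "n < m" using Suc(3) by simp
      from tree_step[OF T G deg cardT PP(1,2,3) this PP(4-7)] show ?thesis .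
    qed
  qed
  have "0 < card VT" using ne finVT by (simp add: card_gt_0_iff)
  then have "1 \<le> m" using cardT by simp
  from inv[OF this order.refl] obtain P f where P: "P \<subseteq> VT" "card P = m" "inj_on f P"
    "f ` P \<subseteq> C0" "\<forall>x\<in>P. \<forall>y\<in>P. {x, y} \<in> ET \<longrightarrow> {f x, f y} \<in> E" by blast
  have "P = VT" using P(1,2) cardT finVT by (simp add: card_subset_eq)
  then show ?thesis using P by blast
qed


locale setupG =
  fixes V :: "'a set" and E :: "'a set set" and k m :: nat
  assumes G: "graph V E" and kpos: "0 < k" and mpos: "0 < m"
    and kec: "k_edge_connected V E k"
    and md: "4 * (k + m)^2 < min_degree V E"
begin

definition J :: nat where "J = 2 * k + 2 * m - 2"

definition frag :: "'a set \<Rightarrow> bool" where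
  "frag C \<longleftrightarrow> C \<subseteq> V \<and> C \<noteq> {} \<and> card (bdry E C) \<le> J \<and> (C \<union> bdry E C = V \<longrightarrow> C = V)"

definition WL :: "'a set \<Rightarrow> 'a set" where
  "WL C = {w \<in> bdry E C. card (nbr E w \<inter> C) < k + m}"

definition C0 :: "'a set \<Rightarrow> 'a set" where
  "C0 C = C - (\<Union>w\<in>WL C. nbr E w)"

lemma finV: "finite V" using G unfolding graph_def by simp

lemma Vne: "V \<noteq> {}" using kec unfolding k_edge_connected_def by simp

lemma deg: "v \<in> V \<Longrightarrow> 4 * (k + m)^2 < card (nbr E v)"
proof -
  assume v: "v \<in> V"
  have "min_degree V E \<le> degree E v"
    unfolding min_degree_def using v finV by simp
  then show ?thesis using md degree_nbr[OF G] by simp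
qed

lemma nbr_fin: "finite (nbr E v)" using nbr_sub[OF G] finV finite_subset by blast

lemma no_loop: "v \<notin> nbr E v" unfolding nbr_def using graph_edge[OF G] by blast

lemma cardV: "4 * (k + m)^2 + 2 \<le> card V"
proof -
  obtain v where v: "v \<in> V" using Vne by blast
  have "insert v (nbr E v) \<subseteq> V" using v nbr_sub[OF G] by blast
  then have "card (insert v (nbr E v)) \<le> card V" using finV by (simp add: card_mono)
  moreover have "card (insert v (nbr E v)) = Suc (card (nbr E v))"
    using nbr_fin no_loop by simp
  ultimately show ?thesis using deg[OF v] by simp
qed

lemma bdry_sub: "bdry E C \<subseteq> V"
  unfolding bdry_def using graph_edge[OF G] by blast

lemma nbr_in: "c \<in> C \<Longrightarrow> nbr E c \<subseteq> C \<union> bdry E C"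
  unfolding nbr_def bdry_def by blast

lemma frag_V: "frag V"
proof -
  have "bdry E V = {}" using bdry_sub unfolding bdry_def by blast
  then show ?thesis unfolding frag_def using Vne by simp
qed

lemma arith1:
  fixes L j d x :: nat
  assumes "j + 2 \<le> 2 * L" "4 * L^2 < d" "d \<le> x + j * L + j" "m \<le> L"
  shows "m \<le> x"
proof -
  have "j * L + j \<le> (j + 2) * L" using assms(1) by (simp add: algebra_simps)
  also have "\<dots> \<le> (2 * L) * L" using assms(1) by (rule mult_right_mono) simp
  finally have "j * L + j \<le> 2 * L * L" .
  moreover have "L \<le> L * L" using assms(4) mpos by simp
  moreover have "4 * L^2 = 4 * (L * L)" by (simp add: power2_eq_square)
  ultimately show ?thesis using assms(2,3,4) by linarith
qed

lemma C0_props: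
  assumes C: "frag C"
  shows "C0 C \<noteq> {}" "\<forall>c\<in>C0 C. m \<le> card (nbr E c \<inter> C0 C)"
proof -
  let ?W = "bdry E C"
  let ?L = "k + m"
  have CV: "C \<subseteq> V" and cW: "card ?W \<le> J" and Cne: "C \<noteq> {}" using C unfolding frag_def by auto
  have finC: "finite C" using CV finV finite_subset by blast
  have finW: "finite ?W" using bdry_sub finV finite_subset by blast
  have J2: "J + 2 \<le> 2 * ?L" unfolding J_def using kpos mpos by simp
  have c1: "card (nbr E c) \<le> card (nbr E c \<inter> C) + J" if c: "c \<in> C" for c
  proof -
    have "nbr E c \<subseteq> (nbr E c \<inter> C) \<union> ?W" using nbr_in[OF c] by blast
    then have "card (nbr E c) \<le> card ((nbr E c \<inter> C) \<union> ?W)"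
      using finW nbr_fin by (intro card_mono) auto
    also have "\<dots> \<le> card (nbr E c \<inter> C) + card ?W" by (rule card_Un_le)
    finally show ?thesis using cW by simp
  qed
  have c2: "card (C - C0 C) \<le> J * ?L"
  proof -
    have finWL: "finite (WL C)" using finW unfolding WL_def by simp
    have "C - C0 C \<subseteq> (\<Union>w\<in>WL C. nbr E w \<inter> C)" unfolding C0_def by blast
    then have "card (C - C0 C) \<le> card (\<Union>w\<in>WL C. nbr E w \<inter> C)"
      using finC by (intro card_mono) auto
    also have "\<dots> \<le> (\<Sum>w\<in>WL C. card (nbr E w \<inter> C))" by (rule card_UN_le[OF finWL])
    also have "\<dots> \<le> card (WL C) * ?L"
      using sum_bounded_above[of "WL C" "\<lambda>w. card (nbr E w \<inter> C)" ?L]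
      unfolding WL_def by fastforce
    also have "\<dots> \<le> J * ?L"
    proof -
      have "card (WL C) \<le> card ?W" unfolding WL_def using finW by (intro card_mono) auto
      then show ?thesis using cW by (intro mult_right_mono) auto
    qed
    finally show ?thesis .
  qed
  show "\<forall>c\<in>C0 C. m \<le> card (nbr E c \<inter> C0 C)"
  proof
    fix c assume c: "c \<in> C0 C"
    then have cC: "c \<in> C" and cV: "c \<in> V" unfolding C0_def using CV by auto
    have "nbr E c \<inter> C \<subseteq> (nbr E c \<inter> C0 C) \<union> (C - C0 C)" by blast
    then have "card (nbr E c \<inter> C) \<le> card ((nbr E c \<inter> C0 C) \<union> (C - C0 C))"
      using finC nbr_fin by (intro card_mono) auto
    also have "\<dots> \<le> card (nbr E c \<inter> C0 C) + card (C - C0 C)" by (rule card_Un_le)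
    finally have "card (nbr E c) \<le> card (nbr E c \<inter> C0 C) + J * ?L + J"
      using c1[OF cC] c2 by simp
    then show "m \<le> card (nbr E c \<inter> C0 C)"
      by (rule arith1[OF J2 deg[OF cV]]) simp
  qed
  show "C0 C \<noteq> {}"
  proof
    assume e: "C0 C = {}"
    obtain c where cC: "c \<in> C" using Cne by blast
    then have cV: "c \<in> V" using CV by blast
    have "card (nbr E c \<inter> C) \<le> card C" using finC by (intro card_mono) auto
    also have "\<dots> \<le> J * ?L" using c2 e by simp
    finally have h: "card (nbr E c) \<le> 0 + J * ?L + J" using c1[OF cC] by simp
    have "m \<le> 0" by (rule arith1[OF J2 deg[OF cV] h]) simp
    then show False using mpos by simp
  qed
qed

end


context setupG
begin

lemma cardV1: "card V \<noteq> 1" using cardV by simp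

lemma touch:
  assumes S: "S \<subseteq> V" "S \<noteq> {}" and AB: "A \<union> B = V - S" "A \<inter> B = {}" "B \<noteq> {}"
    and lt: "card (cutE E A B) < k"
  shows "\<exists>b\<in>B. \<exists>s\<in>S. {s, b} \<in> E"
proof (rule ccontr)
  assume no: "\<not> (\<exists>b\<in>B. \<exists>s\<in>S. {s, b} \<in> E)"
  have BV: "B \<subseteq> V" "B \<noteq> V" using AB S by auto
  have "k \<le> card (cutE E B (V - B))" by (rule kec_cut[OF G kec cardV1 BV(1) AB(3) BV(2)])
  moreover have "cutE E B (V - B) \<subseteq> cutE E A B"
  proof
    fix e assume "e \<in> cutE E B (V - B)"
    then obtain x y where e: "e \<in> E" "x \<in> B" "y \<in> V - B" "e = {x, y}" unfolding cutE_def by blast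
    have "y \<notin> S" using no e by (auto simp: insert_commute)
    then have "y \<in> A" using e AB by blast
    then show "e \<in> cutE E A B" using e unfolding cutE_def by (auto simp: insert_commute)
  qed
  then have "card (cutE E B (V - B)) \<le> card (cutE E A B)"
    by (rule card_mono[OF cutE_fin[OF G]])
  ultimately show False using lt by simp
qed

lemma L1:
  assumes C: "frag C" and S: "S \<subseteq> C0 C" "card S \<le> m"
    and AB: "A \<union> B = V - S" "A \<inter> B = {}" and CB: "C \<inter> B = {}"
    and bs: "b \<in> B" "s \<in> S" "{s, b} \<in> E"
  shows "k \<le> card (cutE E A B)"
proof -
  have CV: "C \<subseteq> V" using C unfolding frag_def by simp
  have finC: "finite C" using CV finV finite_subset by blast
  have sC: "s \<in> C" using S bs unfolding C0_def by blast
  have bC: "b \<notin> C" using CB bs by blast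
  have bW: "b \<in> bdry E C" unfolding bdry_def using bC sC bs by blast
  have "b \<notin> WL C"
  proof
    assume "b \<in> WL C"
    moreover have "s \<in> nbr E b" unfolding nbr_def using bs by (simp add: insert_commute)
    ultimately show False using S bs unfolding C0_def by blast
  qed
  then have big: "k + m \<le> card (nbr E b \<inter> C)" using bW unfolding WL_def by simp
  have SV: "S \<subseteq> V" using S CV unfolding C0_def by blast
  have finS: "finite S" using SV finV finite_subset by blast
  have "nbr E b \<inter> C \<subseteq> (nbr E b \<inter> A) \<union> S" using CV CB AB by blast
  then have "card (nbr E b \<inter> C) \<le> card ((nbr E b \<inter> A) \<union> S)"
    using nbr_fin finS by (intro card_mono) auto
  also have "\<dots> \<le> card (nbr E b \<inter> A) + card S" by (rule card_Un_le)
  finally have "k \<le> card (nbr E b \<inter> A)" using big S(2) by simp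
  also have "\<dots> \<le> card (cutE E A B)" by (rule card_nbr_cut[OF G bs(1)])
  finally show ?thesis .
qed

lemma L2:
  assumes C: "frag C" and minC: "\<And>C'. frag C' \<Longrightarrow> card C \<le> card C'"
    and S: "S \<subseteq> C" "S \<noteq> {}" "card S \<le> m"
    and AB: "A \<union> B = V - S" "A \<inter> B = {}" "B \<noteq> {}"
    and CA: "C \<inter> A \<noteq> {}" and WA: "card (bdry E C \<inter> A) \<le> k + m - 1"
    and lt: "card (cutE E A B) < k"
  shows False
proof -
  define K where "K = C \<inter> A"
  have CV: "C \<subseteq> V" using C unfolding frag_def by simp
  have finC: "finite C" using CV finV finite_subset by blast
  have SV: "S \<subseteq> V" using S CV by blast
  have finS: "finite S" using SV finV finite_subset by blast
  define T where "T = {b\<in>B. \<exists>a\<in>A. {a, b} \<in> E}"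
  have cT: "card T \<le> card (cutE E A B)" unfolding T_def by (rule card_touch_cut[OF G AB(2)])
  have "T \<subseteq> V" unfolding T_def using AB by blast
  then have finT: "finite T" using finV finite_subset by blast
  have finWA: "finite (bdry E C \<inter> A)" using bdry_sub finV finite_subset by blast
  have bK: "bdry E K \<subseteq> S \<union> (bdry E C \<inter> A) \<union> T"
  proof
    fix y assume y: "y \<in> bdry E K"
    then obtain x where x: "x \<in> K" "{x, y} \<in> E" "y \<notin> K" unfolding bdry_def by blast
    have yV: "y \<in> V" using graph_edge[OF G x(2)] by blast
    show "y \<in> S \<union> (bdry E C \<inter> A) \<union> T"
    proof (cases "y \<in> S")
      case False
      then have "y \<in> A \<or> y \<in> B" using yV AB by blast
      then show ?thesis
      proof
        assume yA: "y \<in> A"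
        then have "y \<notin> C" using x(3) unfolding K_def by blast
        then have "y \<in> bdry E C" unfolding bdry_def using x unfolding K_def by blast
        then show ?thesis using yA by blast
      next
        assume yB: "y \<in> B"
        then show ?thesis using x unfolding T_def K_def by blast
      qed
    qed simp
  qed
  have "card (bdry E K) \<le> card (S \<union> (bdry E C \<inter> A) \<union> T)"
    using finS finWA finT bK by (intro card_mono) auto
  also have "\<dots> \<le> card (S \<union> (bdry E C \<inter> A)) + card T" by (rule card_Un_le)
  also have "\<dots> \<le> card S + card (bdry E C \<inter> A) + card T" using card_Un_le by simp
  finally have cbK: "card (bdry E K) \<le> J" using S(3) WA cT lt kpos mpos unfolding J_def by linarith
  have exb: "\<exists>b\<in>B. b \<notin> T"
  proof (rule ccontr)
    assume "\<not> (\<exists>b\<in>B. b \<notin> T)"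
    then have BT: "B \<subseteq> T" by blast
    have "B \<subseteq> V" using AB by blast
    then have finB: "finite B" using finV finite_subset by blast
    have cB: "card B < k" using card_mono[OF finT BT] cT lt by simp
    obtain b where b: "b \<in> B" using AB by blast
    have bV: "b \<in> V" using b AB by blast
    have "nbr E b \<subseteq> B \<union> S \<union> (nbr E b \<inter> A)" using nbr_sub[OF G] AB by blast
    then have "card (nbr E b) \<le> card (B \<union> S \<union> (nbr E b \<inter> A))"
      using finB finS nbr_fin by (intro card_mono) auto
    also have "\<dots> \<le> card (B \<union> S) + card (nbr E b \<inter> A)" by (rule card_Un_le)
    also have "\<dots> \<le> card B + card S + card (nbr E b \<inter> A)" using card_Un_le by simp
    finally have "card (nbr E b) \<le> card B + card S + card (nbr E b \<inter> A)" .
    moreover have "card (nbr E b \<inter> A) \<le> card (cutE E A B)" by (rule card_nbr_cut[OF G b])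
    ultimately have "card (nbr E b) < 2 * k + 2 * m" using cB S(3) lt by linarith
    have q: "2 * (k + m) \<le> 4 * (k + m)^2"
    proof -
      obtain L where L: "L = k + m" by simp
      have "L \<le> L * L" using kpos L by simp
      moreover have "L^2 = L * L" by (simp add: power2_eq_square)
      ultimately have "2 * L \<le> 4 * L^2" by linarith
      then show ?thesis using L by simp
    qed
    note \<open>card (nbr E b) < 2 * k + 2 * m\<close>
    then have "card (nbr E b) < 2 * (k + m)" by simp
    then have "card (nbr E b) < 4 * (k + m)^2" using q by (rule less_le_trans)
    with deg[OF bV] show False by simp
  qed
  then obtain b where b: "b \<in> B" "b \<notin> T" by blast
  have bV: "b \<in> V" using b AB by blast
  have "b \<notin> K" using b AB unfolding K_def by blast
  moreover have "b \<notin> bdry E K" using b unfolding bdry_def T_def K_def by blast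
  ultimately have KV: "K \<union> bdry E K \<noteq> V" using bV by blast
  have "frag K" unfolding frag_def using CA cbK KV CV unfolding K_def by blast
  then have "card C \<le> card K" by (rule minC)
  moreover have "K \<subset> C"
  proof -
    obtain s where "s \<in> S" using S by blast
    then have "s \<in> C" "s \<notin> K" using S AB unfolding K_def by auto
    then show ?thesis unfolding K_def by blast
  qed
  then have "card K < card C" using finC by (simp add: psubset_card_mono)
  ultimately show False by simp
qed

lemma main_cut:
  assumes C: "frag C" and minC: "\<And>C'. frag C' \<Longrightarrow> card C \<le> card C'"
    and S: "S \<subseteq> C0 C" "S \<noteq> {}" "card S \<le> m"
    and AB: "A \<union> B = V - S" "A \<inter> B = {}" "A \<noteq> {}" "B \<noteq> {}"
  shows "k \<le> card (cutE E A B)"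
proof (rule ccontr)
  assume "\<not> k \<le> card (cutE E A B)"
  then have lt: "card (cutE E A B) < k" by simp
  have ltBA: "card (cutE E B A) < k" using lt cutE_sym by metis
  have CV: "C \<subseteq> V" using C unfolding frag_def by simp
  have SC: "S \<subseteq> C" using S unfolding C0_def by blast
  have SV: "S \<subseteq> V" using SC CV by blast
  have AB': "B \<union> A = V - S" "B \<inter> A = {}" using AB by auto
  obtain b s where bs: "b \<in> B" "s \<in> S" "{s, b} \<in> E" using touch[OF SV S(2) AB(1,2,4) lt] by blast
  obtain a s' where as: "a \<in> A" "s' \<in> S" "{s', a} \<in> E" using touch[OF SV S(2) AB'(1,2) AB(3) ltBA] by blast
  show False
  proof (cases "C \<inter> B = {}")
    case True
    from L1[OF C S(1,3) AB(1,2) True bs] lt show False by simp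
  next
    case CB: False
    show False
    proof (cases "C \<inter> A = {}")
      case True
      from L1[OF C S(1,3) AB'(1,2) True as] ltBA show False by simp
    next
      case CA: False
      let ?W = "bdry E C"
      have finW: "finite ?W" using bdry_sub finV finite_subset by blast
      have "card (?W \<inter> A) + card (?W \<inter> B) = card ((?W \<inter> A) \<union> (?W \<inter> B))"
        using finW AB(2) by (intro card_Un_disjoint[symmetric]) auto
      also have "\<dots> \<le> card ?W" using finW by (intro card_mono) auto
      also have "\<dots> \<le> J" using C unfolding frag_def by simp
      finally have "card (?W \<inter> A) \<le> k + m - 1 \<or> card (?W \<inter> B) \<le> k + m - 1"
        unfolding J_def by linarith
      then show False
      proof
        assume "card (?W \<inter> A) \<le> k + m - 1"
        from L2[OF C minC SC S(2,3) AB(1,2,4) CA this lt] show False .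
      next
        assume "card (?W \<inter> B) \<le> k + m - 1"
        from L2[OF C minC SC S(2,3) AB'(1,2) AB(3) CB this ltBA] show False .
      qed
    qed
  qed
qed

end


theorem theorem3p3:
  fixes k m :: nat and VT :: "'b set" and ET :: "'b set set"
    and V :: "'a set" and E :: "'a set set"
  assumes "k > 0" and "m > 0"
    and "tree VT ET" and "card VT = m"
    and "graph V E" and "k_edge_connected V E k"
    and "min_degree V E > 4 * (k + m)^2"
  shows "\<exists>VT' ET'. subgraph VT' ET' V E \<and> graph_iso VT ET VT' ET' \<and>
           k_edge_connected (fst (delete_vertices V E VT')) (snd (delete_vertices V E VT')) k"
proof -
  interpret setupG V E k m
    using assms by unfold_locales auto
  obtain C where C: "frag C" and minC: "\<And>C'. frag C' \<Longrightarrow> card C \<le> card C'"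
    using ex_has_least_nat[of frag V card] frag_V by blast
  have CV: "C \<subseteq> V" using C unfolding frag_def by simp
  obtain f where f: "inj_on f VT" "f ` VT \<subseteq> C0 C"
    "\<forall>x\<in>VT. \<forall>y\<in>VT. {x, y} \<in> ET \<longrightarrow> {f x, f y} \<in> E"
    using tree_embed[OF assms(3) G assms(4) C0_props[OF C]] by blast
  have gT: "graph VT ET" using assms(3) unfolding tree_def by simp
  have finVT: "finite VT" using gT unfolding graph_def by simp
  define S where "S = f ` VT"
  define ET' where "ET' = (\<lambda>e. f ` e) ` ET"
  have SC0: "S \<subseteq> C0 C" using f(2) unfolding S_def .
  have SV: "S \<subseteq> V" using SC0 CV unfolding C0_def by blast
  have cS: "card S = m" unfolding S_def using f(1) assms(4) by (simp add: card_image)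
  have Sne: "S \<noteq> {}" using cS mpos by auto
  have edgeT: "\<exists>a b. a \<noteq> b \<and> a \<in> VT \<and> b \<in> VT \<and> e = {a, b}" if "e \<in> ET" for e
    using gT that unfolding graph_def by blast
  have sub: "subgraph S ET' V E"
    unfolding subgraph_def graph_def
  proof (intro conjI ballI)
    show "finite S" unfolding S_def using finVT by simp
    show "S \<subseteq> V" by (rule SV)
    show "ET' \<subseteq> E"
    proof
      fix e' assume "e' \<in> ET'"
      then obtain e where e: "e \<in> ET" "e' = f ` e" unfolding ET'_def by blast
      then obtain a b where ab: "a \<noteq> b" "a \<in> VT" "b \<in> VT" "e = {a, b}" using edgeT by blast
      then show "e' \<in> E" using f(3) e by simp
    qed
    fix e' assume "e' \<in> ET'"
    then obtain e where e: "e \<in> ET" "e' = f ` e" unfolding ET'_def by blast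
    then obtain a b where ab: "a \<noteq> b" "a \<in> VT" "b \<in> VT" "e = {a, b}" using edgeT by blast
    have "f a \<noteq> f b" using ab f(1) unfolding inj_on_def by blast
    then show "\<exists>x y. x \<noteq> y \<and> x \<in> S \<and> y \<in> S \<and> e' = {x, y}"
      using ab e unfolding S_def by auto
  qed
  have iso: "graph_iso VT ET S ET'"
    unfolding graph_iso_def
  proof (intro exI[of _ f] conjI ballI)
    show "bij_betw f VT S" unfolding S_def using f(1) by (simp add: bij_betw_def)
    fix x y assume xy: "x \<in> VT" "y \<in> VT"
    show "{x, y} \<in> ET \<longleftrightarrow> {f x, f y} \<in> ET'"
    proof
      assume "{x, y} \<in> ET"
      then show "{f x, f y} \<in> ET'" unfolding ET'_def by (metis image_empty image_insert imageI)
    next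
      assume "{f x, f y} \<in> ET'"
      then obtain e where e: "e \<in> ET" "{f x, f y} = f ` e" unfolding ET'_def by blast
      then obtain a b where ab: "a \<noteq> b" "a \<in> VT" "b \<in> VT" "e = {a, b}" using edgeT by blast
      then have "{f x, f y} = {f a, f b}" using e by simp
      then have "(f x = f a \<and> f y = f b) \<or> (f x = f b \<and> f y = f a)" by (simp add: doubleton_eq_iff)
      then have "(x = a \<and> y = b) \<or> (x = b \<and> y = a)"
        using f(1) xy ab unfolding inj_on_def by blast
      then have "{x, y} = e" using ab by auto
      then show "{x, y} \<in> ET" using e by simp
    qed
  qed
  let ?V' = "V - S"
  let ?E' = "{e \<in> E. e \<subseteq> V - S}"
  have finS: "finite S" using SV finV finite_subset by blast
  have cV': "card ?V' = card V - m" using SV finS cS by (simp add: card_Diff_subset)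
  have mq: "m \<le> 4 * (k + m)^2"
  proof -
    obtain L where L: "L = k + m" by simp
    have "L \<le> L * L" using kpos L by simp
    moreover have "L^2 = L * L" by (simp add: power2_eq_square)
    moreover have "m \<le> L" using L by simp
    ultimately have "m \<le> 4 * L^2" by linarith
    then show ?thesis using L by simp
  qed
  have "2 \<le> card ?V'" using cV' cardV mq by linarith
  then have V'1: "card ?V' \<noteq> 1" by simp
  have V'ne: "?V' \<noteq> {}"
  proof
    assume "?V' = {}"
    with \<open>2 \<le> card ?V'\<close> show False by simp
  qed
  have finE': "finite ?E'" using graph_finE[OF G] by simp
  have "k_edge_connected ?V' ?E' k"
  proof (rule cut_kec[OF V'ne V'1 finE'])
    fix A assume A: "A \<subseteq> ?V'" "A \<noteq> {}" "A \<noteq> ?V'"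
    let ?B = "?V' - A"
    have AB: "A \<union> ?B = V - S" "A \<inter> ?B = {}" "A \<noteq> {}" "?B \<noteq> {}" using A by auto
    have cSle: "card S \<le> m" using cS by simp
    have "k \<le> card (cutE E A ?B)" by (rule main_cut[OF C minC SC0 Sne cSle AB])
    also have "\<dots> \<le> card (cutE ?E' A ?B)"
    proof (rule card_mono)
      show "finite (cutE ?E' A ?B)" unfolding cutE_def by (rule finite_subset[OF _ finE']) blast
      show "cutE E A ?B \<subseteq> cutE ?E' A ?B" unfolding cutE_def using A(1) by blast
    qed
    finally show "k \<le> card (cutE ?E' A ?B)" .
  qed
  then have "k_edge_connected (fst (delete_vertices V E S)) (snd (delete_vertices V E S)) k"
    unfolding delete_vertices_def by simp
  with sub iso show ?thesis by blast
qed


end
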